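(* Let $S(z)$ be a Rosenbrock system matrix and $\lambda\in\mathbb{C}$ with $S(\lambda)$ invertible. Then $$\eta^{\mathbb{S}}(\lambda,A,B)=(\mu_{\mathcal{S}}(M))^{-1},\qquad M=S(\lambda)^{-1}\begin{bmatrix}I_r&I_r\\0_{n,r}&0_{n,r}\end{bmatrix},$$ where $\mathcal{S}=\{\operatorname{diag}(\Delta_1,\Delta_2) : \Delta_1\in\mathbb{C}^{r,r},\ \Delta_2\in\mathbb{C}^{r,n}\}$.
   Context: A Rosenbrock system matrix is $S(z)=\begin{bmatrix}A-zI_r & B\\ C & P(z)\end{bmatrix}$ with $A\in\mathbb{C}^{r,r}$, $B\in\mathbb{C}^{r,n}$, $C\in\mathbb{C}^{n,r}$, $P(z)=\sum_{k=0}^d z^kA_k$, $A_k\in\mathbb{C}^{n,n}$. $\|\cdot\|$ is the spectral norm. The backward error with perturbation of blocks $A$ and $B$ only is $\eta^{\mathbb{S}}(\lambda,A,B):=\inf\{\max\{\|\Delta_A\|,\|\Delta_B\|\} : \Delta_A\in\mathbb{C}^{r,r},\Delta_B\in\mathbb{C}^{r,n},\ \det(S(\lambda)-\begin{bmatrix}\Delta_A&\Delta_B\\0&0\end{bmatrix})=0\}$. Structured $\mu$-value: for $M\in\mathbb{C}^{k,p}$ and $\mathcal{S}\subseteq\mathbb{C}^{p,k}$, $\mu_{\mathcal{S}}(M):=\big(\inf\{\|\Delta\| : \Delta\in\mathcal{S},\ \det(I_p-\Delta M)=0\}\big)^{-1}$, with $\mu_{\mathcal S}(M)=0$ if no such $\Delta$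 exists; $\operatorname{diag}$ of rectangular blocks is the block-diagonal matrix with those blocks. *)

theory Defs
  imports "HOL-Analysis.Analysis"
begin

text \<open>Spectral norm of a (possibly rectangular) complex matrix: the operator norm
  induced by the Euclidean norms (vec norms are the 2-norms).\<close>
definition specnorm :: "complex^'c^'r \<Rightarrow> real" where
  "specnorm M = onorm (\<lambda>x. M *v x)"

definition matpoly :: "nat \<Rightarrow> (nat \<Rightarrow> complex^'n^'n) \<Rightarrow> complex \<Rightarrow> complex^'n^'n" where
  "matpoly d Ak z = (\<chi> i j. \<Sum>k=0..d. z ^ k * (Ak k $ i $ j))"

text \<open>Rosenbrock system matrix S(z) = [A - zI, B; C, P(z)], indexed by 'r + 'n.\<close>
definition rosenbrock ::
  "complex^'r^'r \<Rightarrow> complex^'n^'r \<Rightarrow> complex^'r^'n \<Rightarrow> nat \<Rightarrow> (nat \<Rightarrow> complex^'n^'n)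
    \<Rightarrow> complex \<Rightarrow> complex^('r + 'n)^('r + 'n)" where
  "rosenbrock A B C d Ak z = (\<chi> i j. case i of
      Inl a \<Rightarrow> (case j of Inl b \<Rightarrow> A $ a $ b - (if a = b then z else 0) | Inr b \<Rightarrow> B $ a $ b)
    | Inr a \<Rightarrow> (case j of Inl b \<Rightarrow> C $ a $ b | Inr b \<Rightarrow> matpoly d Ak z $ a $ b))"

definition pertAB :: "complex^'r^'r \<Rightarrow> complex^'n^'r \<Rightarrow> complex^('r + 'n)^('r + 'n)" where
  "pertAB DA DB = (\<chi> i j. case i of
      Inl a \<Rightarrow> (case j of Inl b \<Rightarrow> DA $ a $ b | Inr b \<Rightarrow> DB $ a $ b)
    | Inr a \<Rightarrow> 0)"

definition eta_AB ::
  "complex^'r^'r \<Rightarrow> complex^'n^'r \<Rightarrow> complex^'r^'n \<Rightarrow> nat \<Rightarrow> (nat \<Rightarrow> complex^'n^'n)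
    \<Rightarrow> complex \<Rightarrow> real" where
  "eta_AB A B C d Ak lam = Inf {max (specnorm DA) (specnorm DB) | DA DB.
      det (rosenbrock A B C d Ak lam - pertAB DA DB) = 0}"

definition mu_struct :: "(complex^'k^'p) set \<Rightarrow> complex^'p^'k \<Rightarrow> real" where
  "mu_struct SS M = (if {D \<in> SS. det (mat 1 - D ** M) = 0} = {} then 0
     else inverse (Inf {specnorm D | D. D \<in> SS \<and> det (mat 1 - D ** M) = 0}))"

definition blockdiag :: "complex^'r^'r \<Rightarrow> complex^'n^'r \<Rightarrow> complex^('r + 'n)^('r + 'r)" where
  "blockdiag D1 D2 = (\<chi> i j. case i of
      Inl a \<Rightarrow> (case j of Inl b \<Rightarrow> D1 $ a $ b | Inr b \<Rightarrow> 0)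
    | Inr a \<Rightarrow> (case j of Inl b \<Rightarrow> 0 | Inr b \<Rightarrow> D2 $ a $ b))"

definition IIblock :: "complex^('r::finite + 'r)^('r + 'n::finite)" where
  "IIblock = (\<chi> i j. case i of
      Inl a \<Rightarrow> (case j of Inl b \<Rightarrow> (if a = b then 1 else 0) | Inr b \<Rightarrow> (if a = b then 1 else 0))
    | Inr a \<Rightarrow> 0)"

end

theory Submission imports Defs begin

lemma det0_iff_ker:
  fixes N :: "complex^'k^'k"
  shows "det N = 0 \<longleftrightarrow> (\<exists>y. y \<noteq> 0 \<and> N *v y = 0)"
  by (metis invertible_det_nz invertible_left_inverse matrix_left_invertible_ker)

lemma matrix_inv_props:
  assumes "invertible (S::complex^'k^'k)"
  shows "S ** matrix_inv S = mat 1" "matrix_inv S ** S = mat 1"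
  using someI_ex[OF assms[unfolded invertible_def]] unfolding matrix_inv_def by auto

lemma norm_sq: "(norm (x::complex^'k))^2 = (\<Sum>i\<in>UNIV. (norm (x$i))^2)"
  unfolding norm_vec_def L2_set_def by (simp add: sum_nonneg)

lemma sum_plus_univ: "sum f (UNIV :: ('a::finite + 'b::finite) set) = (\<Sum>a\<in>UNIV. f (Inl a)) + (\<Sum>b\<in>UNIV. f (Inr b))"
proof -
  have "sum f (UNIV <+> UNIV) = sum (f \<circ> Inl) UNIV + sum (f \<circ> Inr) UNIV"
    by (rule sum.Plus) auto
  then show ?thesis by simp
qed

lemma norm_sq_plus: "(norm (x::complex^('a::finite + 'b::finite)))^2 =
   (norm (\<chi> a. x $ Inl a))^2 + (norm (\<chi> b. x $ Inr b))^2"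
  unfolding norm_sq by (simp add: sum_plus_univ)

lemma bd_mult:
  "(blockdiag D1 D2 *v x) $ Inl a = (D1 *v (\<chi> b. x $ Inl b)) $ a"
  "(blockdiag D1 D2 *v x) $ Inr a = (D2 *v (\<chi> b. x $ Inr b)) $ a"
  unfolding blockdiag_def matrix_vector_mult_def
  by (simp_all add: sum_plus_univ)

lemma if01_mult: "(if P then 1 else 0) * (x::complex) = (if P then x else 0)" by simp

lemma pert_eq: "pertAB D1 D2 = (IIblock :: complex^('r::finite + 'r)^('r + 'n::finite)) ** blockdiag D1 D2"
  unfolding matrix_matrix_mult_def vec_eq_iff
proof (intro allI)
  fix i j
  show "pertAB D1 D2 $ i $ j = (\<chi> i j. \<Sum>k\<in>UNIV. (IIblock :: complex^('r::finite + 'r)^('r + 'n::finite)) $ i $ k * blockdiag D1 D2 $ k $ j) $ i $ j"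
    unfolding pertAB_def IIblock_def blockdiag_def
    by (cases i; cases j) (simp_all add: sum_plus_univ if01_mult)
qed

lemma sn_bound: "norm (M *v x) \<le> specnorm M * norm x"
  unfolding specnorm_def by (rule onorm) simp

lemma sn_nonneg: "0 \<le> specnorm M"
  unfolding specnorm_def by (rule onorm_pos_le) simp

lemma bd_parts:
  "(\<chi> a. (blockdiag D1 D2 *v x) $ Inl a) = D1 *v (\<chi> b. x $ Inl b)"
  "(\<chi> a. (blockdiag D1 D2 *v x) $ Inr a) = D2 *v (\<chi> b. x $ Inr b)"
  by (simp_all add: vec_eq_iff bd_mult)

lemma norm_eq_sq: "(norm (x::'a::real_normed_vector))^2 = (norm (y::'b::real_normed_vector))^2 \<Longrightarrow> norm x = norm y"
  by (simp add: power2_eq_iff_nonneg)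

lemma specnorm_bd:
  fixes D1 :: "complex^'r^'r" and D2 :: "complex^'n^'r"
  shows "specnorm (blockdiag D1 D2) = max (specnorm D1) (specnorm D2)"
proof (rule antisym)
  let ?m = "max (specnorm D1) (specnorm D2)"
  show "specnorm (blockdiag D1 D2) \<le> ?m"
    unfolding specnorm_def[of "blockdiag D1 D2"]
  proof (rule onorm_le)
    fix x :: "complex^('r+'n)"
    define xl where "xl = (\<chi> b. x $ Inl b)"
    define xr where "xr = (\<chi> b. x $ Inr b)"
    have m0: "0 \<le> ?m" using sn_nonneg[of D1] by simp
    have a: "norm (D1 *v xl) \<le> ?m * norm xl"
      using sn_bound[of D1 xl] mult_right_mono[of "specnorm D1" ?m "norm xl"] by simp
    have b: "norm (D2 *v xr) \<le> ?m * norm xr"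
      using sn_bound[of D2 xr] mult_right_mono[of "specnorm D2" ?m "norm xr"] by simp
    have "(norm (blockdiag D1 D2 *v x))^2 = (norm (D1 *v xl))^2 + (norm (D2 *v xr))^2"
      using norm_sq_plus[of "blockdiag D1 D2 *v x"] unfolding bd_parts xl_def xr_def .
    also have "\<dots> \<le> (?m * norm xl)^2 + (?m * norm xr)^2"
      by (intro add_mono power_mono a b) simp_all
    also have "\<dots> = (?m * norm x)^2"
      using norm_sq_plus[of x] unfolding xl_def[symmetric] xr_def[symmetric]
      by (simp add: power_mult_distrib distrib_left)
    finally show "norm (blockdiag D1 D2 *v x) \<le> ?m * norm x"
      by (rule power2_le_imp_le) (simp add: m0)
  qed
next
  let ?s = "specnorm (blockdiag D1 D2)"
  have "specnorm D1 \<le> ?s"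
    unfolding specnorm_def[of D1]
  proof (rule onorm_le)
    fix y :: "complex^'r"
    define x :: "complex^('r+'n)" where "x = (\<chi> i. case i of Inl a \<Rightarrow> y $ a | Inr _ \<Rightarrow> 0)"
    have xl: "(\<chi> b. x $ Inl b) = y" and xr: "(\<chi> b. x $ Inr b) = 0"
      by (simp_all add: x_def vec_eq_iff)
    have nx: "norm x = norm y"
      by (rule norm_eq_sq) (simp add: norm_sq_plus[of x] xl xr)
    have "(norm (D1 *v y))^2 \<le> (norm (blockdiag D1 D2 *v x))^2"
      using norm_sq_plus[of "blockdiag D1 D2 *v x"] unfolding bd_parts xl by simp
    then have "norm (D1 *v y) \<le> norm (blockdiag D1 D2 *v x)"
      by (rule power2_le_imp_le) simp
    also have "\<dots> \<le> ?s * norm y" using sn_bound[of "blockdiag D1 D2" x] nx by simp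
    finally show "norm (D1 *v y) \<le> ?s * norm y" .
  qed
  moreover have "specnorm D2 \<le> ?s"
    unfolding specnorm_def[of D2]
  proof (rule onorm_le)
    fix y :: "complex^'n"
    define x :: "complex^('r+'n)" where "x = (\<chi> i. case i of Inr a \<Rightarrow> y $ a | Inl _ \<Rightarrow> 0)"
    have xl: "(\<chi> b. x $ Inl b) = 0" and xr: "(\<chi> b. x $ Inr b) = y"
      by (simp_all add: x_def vec_eq_iff)
    have nx: "norm x = norm y"
      by (rule norm_eq_sq) (simp add: norm_sq_plus[of x] xl xr)
    have "(norm (D2 *v y))^2 \<le> (norm (blockdiag D1 D2 *v x))^2"
      using norm_sq_plus[of "blockdiag D1 D2 *v x"] unfolding bd_parts xr by simp
    then have "norm (D2 *v y) \<le> norm (blockdiag D1 D2 *v x)"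
      by (rule power2_le_imp_le) simp
    also have "\<dots> \<le> ?s * norm y" using sn_bound[of "blockdiag D1 D2" x] nx by simp
    finally show "norm (D2 *v y) \<le> ?s * norm y" .
  qed
  ultimately show "max (specnorm D1) (specnorm D2) \<le> ?s" by simp
qed


lemma sing_equiv:
  fixes S :: "complex^('r::finite+'n::finite)^('r+'n)"
  assumes inv: "invertible S"
  shows "det (mat 1 - blockdiag D1 D2 ** (matrix_inv S ** IIblock)) = 0 \<longleftrightarrow> det (S - pertAB D1 D2) = 0"
proof -
  let ?D = "blockdiag D1 D2" and ?J = "IIblock :: complex^('r + 'r)^('r + 'n)" and ?Si = "matrix_inv S"
  have SSi: "S *v (?Si *v v) = v" for v
    by (simp add: matrix_vector_mul_assoc matrix_inv_props(1)[OF inv])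
  have SiS: "?Si *v (S *v v) = v" for v
    by (simp add: matrix_vector_mul_assoc matrix_inv_props(2)[OF inv])
  have P: "pertAB D1 D2 = ?J ** ?D" by (rule pert_eq)
  show ?thesis
  proof
    assume "det (mat 1 - ?D ** (?Si ** ?J)) = 0"
    then obtain x where x0: "x \<noteq> 0" and kx: "(mat 1 - ?D ** (?Si ** ?J)) *v x = 0"
      using det0_iff_ker by blast
    define y where "y = ?Si *v (?J *v x)"
    have Dy: "?D *v y = x" using kx
      by (simp add: y_def matrix_vector_mult_diff_rdistrib matrix_vector_mul_assoc)
    have Sy: "S *v y = ?J *v x" by (simp add: y_def SSi)
    have "y \<noteq> 0" using Dy x0 by auto
    moreover have "(S - pertAB D1 D2) *v y = 0"
      by (simp add: P matrix_vector_mult_diff_rdistrib matrix_vector_mul_assoc[symmetric] Dy Sy)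
    ultimately show "det (S - pertAB D1 D2) = 0" using det0_iff_ker by blast
  next
    assume "det (S - pertAB D1 D2) = 0"
    then obtain y where y0: "y \<noteq> 0" and ky: "(S - pertAB D1 D2) *v y = 0"
      using det0_iff_ker by blast
    have Sy: "S *v y = ?J *v (?D *v y)" using ky
      by (simp add: P matrix_vector_mult_diff_rdistrib matrix_vector_mul_assoc)
    define x where "x = ?D *v y"
    have "x \<noteq> 0"
    proof
      assume "x = 0"
      then have "S *v y = 0" using Sy by (simp add: x_def)
      then have "y = 0" using SiS[of y] by simp
      with y0 show False by simp
    qed
    moreover have "(mat 1 - ?D ** (?Si ** ?J)) *v x = 0"
    proof -
      have "?Si *v (?J *v x) = y" using Sy SiS[of y] by (simp add: x_def)
      then show ?thesis
        by (simp add: matrix_vector_mult_diff_rdistrib matrix_vector_mul_assoc[symmetric] x_def)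
    qed
    ultimately show "det (mat 1 - ?D ** (?Si ** ?J)) = 0" using det0_iff_ker by blast
  qed
qed

theorem theorem2p4:
  fixes A :: "complex^'r^'r" and B :: "complex^'n^'r" and C :: "complex^'r^'n"
    and d :: nat and Ak :: "nat \<Rightarrow> complex^'n^'n" and lam :: complex
  assumes "invertible (rosenbrock A B C d Ak lam)"
  shows "eta_AB A B C d Ak lam =
    inverse (mu_struct {blockdiag D1 D2 | D1 D2. True}
                       (matrix_inv (rosenbrock A B C d Ak lam) ** IIblock))"
proof -
  let ?S = "rosenbrock A B C d Ak lam"
  let ?M = "matrix_inv ?S ** (IIblock :: complex^('r + 'r)^('r + 'n))"
  let ?SS = "{blockdiag D1 D2 | (D1 :: complex^'r^'r) (D2 :: complex^'n^'r). True}"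
  let ?X1 = "{max (specnorm DA) (specnorm DB) | (DA :: complex^'r^'r) (DB :: complex^'n^'r).
      det (?S - pertAB DA DB) = 0}"
  let ?X2 = "{specnorm D | D. D \<in> ?SS \<and> det (mat 1 - D ** ?M) = 0}"
  have X: "?X2 = ?X1"
  proof (intro equalityI subsetI)
    fix t assume "t \<in> ?X2"
    then obtain D1 D2 where t: "t = specnorm (blockdiag D1 D2)"
      and dt: "det (mat 1 - blockdiag D1 D2 ** ?M) = 0" by blast
    have "det (?S - pertAB D1 D2) = 0" using dt sing_equiv[OF assms] by blast
    then show "t \<in> ?X1" unfolding t specnorm_bd by blast
  next
    fix t assume "t \<in> ?X1"
    then obtain D1 D2 where t: "t = max (specnorm D1) (specnorm D2)"
      and dt: "det (?S - pertAB D1 D2) = 0" by blast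
    have "det (mat 1 - blockdiag D1 D2 ** ?M) = 0" using dt sing_equiv[OF assms] by blast
    moreover have "t = specnorm (blockdiag D1 D2)" unfolding t specnorm_bd ..
    ultimately show "t \<in> ?X2" by blast
  qed
  define DA :: "complex^'r^'r" where "DA = (\<chi> a b. ?S $ Inl a $ Inl b)"
  define DB :: "complex^'n^'r" where "DB = (\<chi> a b. ?S $ Inl a $ Inr b)"
  have "row (Inl undefined) (?S - pertAB DA DB) = 0"
    by (simp add: row_def vec_eq_iff pertAB_def DA_def DB_def split: sum.splits)
  then have "det (?S - pertAB DA DB) = 0" by (rule det_zero_row(1))
  then have ne: "?X1 \<noteq> {}" by blast
  have ne2: "{D \<in> ?SS. det (mat 1 - D ** ?M) = 0} \<noteq> {}"
    using ne X by blast
  have "mu_struct ?SS ?M = inverse (Inf ?X2)"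
    unfolding mu_struct_def by (rule if_not_P[OF ne2])
  then show ?thesis unfolding eta_AB_def X[symmetric] by simp
qed

end
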